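(* Fix an integer $p\ge 0$ and a subinterval $I_n=[t_n,t_{n+1}]$ of a partition of $[0,T]$, with initial value $u_n=u(t_n)$. Let $U_h=[u_h(t_{n,0}),\dots,u_h(t_{n,p})]^T$ be the nodal values of the DG approximation on $I_n$, i.e. the solution of $LU_h+\frac{\Delta t_n}{2}F(U_h)+B=0$. Consider the fixed-point iteration $$U^{k+1}=-\frac{\Delta t_n}{2}L^{-1}F(U^k)-L^{-1}B,\qquad k=0,1,\dots,$$ where $F$ is the exactly integrated nonlinear vector, and $U^0$ is the explicit-Euler initial iterate. Then for every $K\ge 0$, $$u_h(t_{n,m})-u^K_{n,m}=\mathcal{O}\left(h^{K+2}\right),\qquad m=0,\dots,p,$$ as $h=\max_n\Delta t_n\to 0$, where $U^K=[u^K_{n,0},\dots,u^K_{n,p}]^T$.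
   Context: Initial value problem: $u'(t)=f(t,u(t))$ for $t\in[0,T]$, $u(0)=u_0\in\mathbb{R}$, with $f:\mathbb{R}\times\mathbb{R}\to\mathbb{R}$ sufficiently smooth (of class $\mathcal{C}^{2p+1}$) and Lipschitz in $u$; $u$ denotes the exact solution. Partition $0=t_0<t_1<\dots<t_N=T$, $I_n=[t_n,t_{n+1}]$, $\Delta t_n=t_{n+1}-t_n$, $h=\max_n\Delta t_n$. On the reference interval $[-1,1]$ let $-1<\tau_0<\tau_1<\dots<\tau_p=1$ be the $p+1$ right Gauss–Radau points (including the right endpoint; the quadrature $\int_{-1}^1 g\approx\sum_j\omega_j g(\tau_j)$ with the corresponding weights $\omega_j$ is exact for polynomials of degree $\le 2p$), and $\ell_0,\dots,\ell_p$ the Lagrange polynomials of degree $p$ with $\ell_i(\tau_j)=\delta_{ij}$. Nodes on $I_n$: $t_{n,m}=t_n+\frac{(\tau_m+1)\Delta t_n}{2}$, so $t_{n,p}=t_{n+1}$. Define the $(p+1)\times(p+1)$ matrix $L_{i,j}=\int_{-1}^1\ell_i'(\tau)\ell_j(\tau)\,d\tau-\delta_{ip}\delta_{jp}$ (invertible), the vector $B=u_n[\ell_0(-1),\dots,\ell_p(-1)]^T$, and for $U=[u_{n,0},\dots,u_{n,p}]^T$ the vectors $F(U)_j=\int_{-1}^1 f\big(t_n+\tfrac{(\tau+1)\Delta t_n}{2},\sum_{m=0}^p u_{n,m}\ell_m(\tau)\big)\ell_j(\tau)\,d\tau$ and $F_\omega(U)_j=\omega_j f(t_{n,j},u_{n,j})$,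 $j=0,\dots,p$. The DG approximation $u_h$ on $I_n$ is the degree-$p$ polynomial $u_h(t)=\sum_m u_h(t_{n,m})\ell_m(\tau)$ ($t=t_n+\frac{(\tau+1)\Delta t_n}{2}$) whose nodal vector $U_h$ solves $LU_h+\frac{\Delta t_n}{2}F(U_h)+B=0$ (exists uniquely for $h$ small); the DG step value is $u_{n+1}=u_h(t_{n,p})$. The explicit-Euler initial iterate is $u^0_{n,0}=u_n+(t_{n,0}-t_n)f(t_n,u_n)$, $u^0_{n,m+1}=u^0_{n,m}+(t_{n,m+1}-t_{n,m})f(t_{n,m},u^0_{n,m})$; the implicit-Euler initial iterate is $u^0_{n,0}=u_n+(t_{n,0}-t_n)f(t_{n,0},u^0_{n,0})$, $u^0_{n,m+1}=u^0_{n,m}+(t_{n,m+1}-t_{n,m})f(t_{n,m+1},u^0_{n,m+1})$. All $\mathcal{O}(\cdot)$ constants are independent of $n$ and $h$. *)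

theory Defs
  imports "HOL-Analysis.Analysis" "HOL-Computational_Algebra.Polynomial"
begin

fun Ck :: "nat \<Rightarrow> (real \<times> real \<Rightarrow> real) \<Rightarrow> bool" where
  "Ck 0 g = continuous_on UNIV g"
| "Ck (Suc k) g = (\<exists>g1 g2. (\<forall>z. (g has_derivative (\<lambda>(a, b). g1 z * a + g2 z * b)) (at z))
                          \<and> Ck k g1 \<and> Ck k g2)"

definition lag :: "(nat \<Rightarrow> real) \<Rightarrow> nat \<Rightarrow> nat \<Rightarrow> real \<Rightarrow> real" where
  "lag tau p i x = (\<Prod>j\<in>{..p} - {i}. (x - tau j) / (tau i - tau j))"

definition Lmat :: "(nat \<Rightarrow> real) \<Rightarrow> nat \<Rightarrow> nat \<Rightarrow> nat \<Rightarrow> real" where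
  "Lmat tau p i j = integral {-1..1} (\<lambda>x. deriv (lag tau p i) x * lag tau p j x)
                    - (if i = p \<and> j = p then 1 else 0)"

definition node :: "(nat \<Rightarrow> real) \<Rightarrow> real \<Rightarrow> real \<Rightarrow> nat \<Rightarrow> real" where
  "node tau tn dt m = tn + (tau m + 1) * dt / 2"

definition Fvec :: "(real \<Rightarrow> real \<Rightarrow> real) \<Rightarrow> (nat \<Rightarrow> real) \<Rightarrow> nat \<Rightarrow> real \<Rightarrow> real
                    \<Rightarrow> (nat \<Rightarrow> real) \<Rightarrow> nat \<Rightarrow> real" where
  "Fvec f tau p tn dt U j = integral {-1..1}
     (\<lambda>x. f (tn + (x + 1) * dt / 2) (\<Sum>m\<le>p. U m * lag tau p m x) * lag tau p j x)"

definition Bvec :: "(nat \<Rightarrow> real) \<Rightarrow> nat \<Rightarrow> real \<Rightarrow> nat \<Rightarrow> real" where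
  "Bvec tau p un j = un * lag tau p j (-1)"

definition dg_solution :: "(real \<Rightarrow> real \<Rightarrow> real) \<Rightarrow> (nat \<Rightarrow> real) \<Rightarrow> nat \<Rightarrow> real \<Rightarrow> real
                           \<Rightarrow> real \<Rightarrow> (nat \<Rightarrow> real) \<Rightarrow> bool" where
  "dg_solution f tau p tn dt un U \<longleftrightarrow>
     (\<forall>i\<le>p. (\<Sum>j\<le>p. Lmat tau p i j * U j) + dt / 2 * Fvec f tau p tn dt U i + Bvec tau p un i = 0)"

definition Linv_apply :: "(nat \<Rightarrow> real) \<Rightarrow> nat \<Rightarrow> (nat \<Rightarrow> real) \<Rightarrow> nat \<Rightarrow> real" where
  "Linv_apply tau p r = (THE V. (\<forall>i\<le>p. (\<Sum>j\<le>p. Lmat tau p i j * V j) = r i) \<and> (\<forall>i>p. V i = 0))"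

fun euler0 :: "(real \<Rightarrow> real \<Rightarrow> real) \<Rightarrow> (nat \<Rightarrow> real) \<Rightarrow> real \<Rightarrow> real \<Rightarrow> real \<Rightarrow> nat \<Rightarrow> real" where
  "euler0 f tau tn dt un 0 = un + (node tau tn dt 0 - tn) * f tn un"
| "euler0 f tau tn dt un (Suc m) = euler0 f tau tn dt un m
     + (node tau tn dt (Suc m) - node tau tn dt m) * f (node tau tn dt m) (euler0 f tau tn dt un m)"

fun fp_iter :: "(real \<Rightarrow> real \<Rightarrow> real) \<Rightarrow> (nat \<Rightarrow> real) \<Rightarrow> nat \<Rightarrow> real \<Rightarrow> real \<Rightarrow> real
                \<Rightarrow> nat \<Rightarrow> nat \<Rightarrow> real" where
  "fp_iter f tau p tn dt un 0 = euler0 f tau tn dt un"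
| "fp_iter f tau p tn dt un (Suc k) =
     (\<lambda>i. - (dt / 2) * Linv_apply tau p (Fvec f tau p tn dt (fp_iter f tau p tn dt un k)) i
          - Linv_apply tau p (Bvec tau p un) i)"

definition mesh :: "nat \<Rightarrow> (nat \<Rightarrow> real) \<Rightarrow> real" where
  "mesh N t = Max ((\<lambda>n. t (Suc n) - t n) ` {..<N})"

end

theory Submission imports Defs "Jordan_Normal_Form.Determinant" begin


lemma cont_poly: "continuous_on S (poly (q :: real poly))"
  using continuous_on_poly[OF continuous_on_id, of S q] by simp

lemma int_poly: "poly (q :: real poly) integrable_on {a..b::real}"
  by (rule integrable_continuous_interval[OF cont_poly])

lemma int_poly2: "(\<lambda>x. poly q x * poly r x) integrable_on {a..b::real}" for q r :: "real poly"
  by (rule integrable_continuous_interval) (intro continuous_on_mult cont_poly)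

lemma ftc_poly: "integral {-1..1} (poly (pderiv r)) = poly r 1 - poly r (-1)" for r :: "real poly"
proof -
  have d: "(poly r has_vector_derivative poly (pderiv r) x) (at x within {-1..1})" for x
    using has_real_derivative_iff_has_vector_derivative[THEN iffD1, OF poly_DERIV[of r x]]
    by (rule has_vector_derivative_at_within)
  have "(poly (pderiv r) has_integral poly r 1 - poly r (-1)) {-1..1}"
    by (rule fundamental_theorem_of_calculus) (auto intro: d)
  then show ?thesis by (rule integral_unique)
qed

lemma ibp: fixes a b :: "real poly" shows "integral {-1..1} (\<lambda>x. poly (pderiv a) x * poly b x)
  = poly a 1 * poly b 1 - poly a (-1) * poly b (-1) - integral {-1..1} (\<lambda>x. poly a x * poly (pderiv b) x)"
proof -
  have e: "(\<lambda>x. poly (pderiv a) x * poly b x) = (\<lambda>x. poly (pderiv (a*b)) x - poly a x * poly (pderiv b) x)"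
    by (rule ext) (simp add: pderiv_mult algebra_simps)
  have "integral {-1..1} (\<lambda>x. poly (pderiv (a*b)) x - poly a x * poly (pderiv b) x)
     = integral {-1..1} (poly (pderiv (a*b))) - integral {-1..1} (\<lambda>x. poly a x * poly (pderiv b) x)"
    by (rule integral_diff) (auto intro: int_poly int_poly2)
  then show ?thesis by (simp add: e ftc_poly)
qed

locale radau =
  fixes tau :: "nat \<Rightarrow> real" and p :: nat
  assumes mono: "\<forall>i<p. tau i < tau (Suc i)" and first: "-1 < tau 0" and last: "tau p = 1"
begin

lemma tau_less: "i < j \<Longrightarrow> j \<le> p \<Longrightarrow> tau i < tau j"
proof (induction j)
  case 0 then show ?case by simp
next
  case (Suc j)
  then have "tau j < tau (Suc j)" using mono by auto
  then show ?case using Suc by (cases "i = j") auto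
qed

lemma tau_le: "i \<le> j \<Longrightarrow> j \<le> p \<Longrightarrow> tau i \<le> tau j"
  using tau_less by (metis le_less)

lemma tau_inj: "i \<le> p \<Longrightarrow> j \<le> p \<Longrightarrow> tau i = tau j \<Longrightarrow> i = j"
  using tau_less by (metis linorder_neqE_nat less_irrefl)

lemma tau_range: "i \<le> p \<Longrightarrow> -1 < tau i \<and> tau i \<le> 1"
  using tau_le[of 0 i] tau_le[of i p] first last by auto

definition lagp :: "nat \<Rightarrow> real poly" where
  "lagp i = (\<Prod>j\<in>{..p}-{i}. Polynomial.smult (1/(tau i - tau j)) [:-tau j, 1:])"

lemma poly_lagp: "poly (lagp i) x = lag tau p i x"
  unfolding lagp_def lag_def poly_prod by (intro prod.cong) (auto simp: add_divide_distrib[symmetric] diff_divide_distrib[symmetric])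

lemma lag_poly: "lag tau p i = poly (lagp i)"
  by (rule ext) (simp add: poly_lagp)

lemma degree_lagp: "i \<le> p \<Longrightarrow> degree (lagp i) \<le> p"
proof -
  assume i: "i \<le> p"
  define F where "F j = Polynomial.smult (1/(tau i - tau j)) [:-tau j, 1:]" for j
  have "degree (lagp i) \<le> sum (degree \<circ> F) ({..p}-{i})"
    unfolding lagp_def F_def[symmetric] by (rule degree_prod_sum_le) simp
  also have "\<dots> \<le> (\<Sum>j\<in>{..p}-{i}. 1)"
  proof (intro sum_mono)
    fix j
    have "degree (F j) \<le> degree [:-tau j, 1:]" unfolding F_def by (rule degree_smult_le)
    then show "(degree \<circ> F) j \<le> 1" by simp
  qed
  also have "\<dots> = p" using i by simp
  finally show ?thesis .
qed

lemma lag_node: "i \<le> p \<Longrightarrow> j \<le> p \<Longrightarrow> lag tau p i (tau j) = (if i = j then 1 else 0)"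
proof -
  assume i: "i \<le> p" and j: "j \<le> p"
  show ?thesis
  proof (cases "i = j")
    case True
    have "lag tau p i (tau j) = (\<Prod>k\<in>{..p}-{i}. 1)"
      unfolding lag_def using True tau_inj i by (intro prod.cong) auto
    then show ?thesis using True by simp
  next
    case False
    then have "j \<in> {..p}-{i}" using j by auto
    then have "lag tau p i (tau j) = 0" unfolding lag_def
      by (subst prod_zero_iff) auto
    then show ?thesis using False by simp
  qed
qed

lemma lag1: "i \<le> p \<Longrightarrow> lag tau p i 1 = (if i = p then 1 else 0)"
  using lag_node[of i p] last by simp

lemma interp: assumes dq: "degree q \<le> p"
  shows "poly q x = (\<Sum>i\<le>p. poly q (tau i) * lag tau p i x)"
proof -
  define r where "r = q - (\<Sum>i\<le>p. Polynomial.smult (poly q (tau i)) (lagp i))"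
  have dr: "degree r \<le> p" unfolding r_def
    by (intro degree_diff_le dq degree_sum_le) (auto intro: order_trans[OF degree_smult_le] degree_lagp)
  have rz: "poly r (tau j) = 0" if "j \<le> p" for j
  proof -
    have "(\<Sum>i\<le>p. poly q (tau i) * lag tau p i (tau j)) = (\<Sum>i\<le>p. if i = j then poly q (tau i) else 0)"
      using that by (intro sum.cong) (auto simp: lag_node)
    also have "\<dots> = poly q (tau j)" using that by simp
    finally show ?thesis unfolding r_def by (simp add: poly_sum poly_lagp)
  qed
  have "r = 0"
  proof (rule ccontr)
    assume r0: "r \<noteq> 0"
    have "tau ` {..p} \<subseteq> {x. poly r x = 0}" using rz by auto
    then have "card (tau ` {..p}) \<le> card {x. poly r x = 0}"
      by (intro card_mono poly_roots_finite r0)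
    also have "\<dots> \<le> p" using card_poly_roots_bound[OF r0] dr by simp
    also have "card (tau ` {..p}) = Suc p"
      by (subst card_image) (auto intro: inj_onI tau_inj)
    finally show False by simp
  qed
  then have "poly q x = poly (\<Sum>i\<le>p. Polynomial.smult (poly q (tau i)) (lagp i)) x" unfolding r_def by simp
  then show ?thesis by (simp add: poly_sum poly_lagp)
qed

lemma sum_lag: "(\<Sum>i\<le>p. lag tau p i x) = 1"
  using interp[of 1 x] by simp

definition Qp :: "(nat \<Rightarrow> real) \<Rightarrow> real poly" where
  "Qp v = (\<Sum>j\<le>p. Polynomial.smult (v j) (lagp j))"

lemma poly_Qp: "poly (Qp v) x = (\<Sum>j\<le>p. v j * lag tau p j x)"
  by (simp add: Qp_def poly_sum poly_lagp)

lemma Qp_node: "j \<le> p \<Longrightarrow> poly (Qp v) (tau j) = v j"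
proof -
  assume j: "j \<le> p"
  have "(\<Sum>i\<le>p. v i * lag tau p i (tau j)) = (\<Sum>i\<le>p. if i = j then v i else 0)"
    using j by (intro sum.cong) (auto simp: lag_node)
  then show ?thesis using j by (simp add: poly_Qp)
qed

lemma Qp1: "poly (Qp v) 1 = v p" using Qp_node[of p] last by simp

lemma degree_Qp: "degree (Qp v) \<le> p"
  unfolding Qp_def by (intro degree_sum_le) (auto intro: order_trans[OF degree_smult_le] degree_lagp)

lemma pderiv_Qp: "pderiv (Qp v) = (\<Sum>j\<le>p. Polynomial.smult (v j) (pderiv (lagp j)))"
  using higher_pderiv_sum[of 1 "\<lambda>j. Polynomial.smult (v j) (lagp j)" "{..p}"] by (simp add: Qp_def pderiv_smult)

lemma deriv_lag: "deriv (lag tau p i) x = poly (pderiv (lagp i)) x"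
  unfolding lag_poly by (rule DERIV_imp_deriv[OF poly_DERIV])

lemma Lmat_eq: "Lmat tau p i j = integral {-1..1} (\<lambda>x. poly (pderiv (lagp i)) x * poly (lagp j) x)
   - (if i = p \<and> j = p then 1 else 0)"
  unfolding Lmat_def deriv_lag poly_lagp ..

lemma Ldot: assumes i: "i \<le> p"
  shows "(\<Sum>j\<le>p. Lmat tau p i j * v j)
    = integral {-1..1} (\<lambda>x. poly (pderiv (lagp i)) x * poly (Qp v) x) - lag tau p i 1 * v p"
proof -
  have "(\<Sum>j\<le>p. Lmat tau p i j * v j) = (\<Sum>j\<le>p. integral {-1..1} (\<lambda>x. poly (pderiv (lagp i)) x * poly (lagp j) x) * v j)
      - (\<Sum>j\<le>p. (if i = p \<and> j = p then 1 else 0) * v j)"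
    by (simp add: Lmat_eq left_diff_distrib sum_subtractf)
  also have "(\<Sum>j\<le>p. (if i = p \<and> j = p then 1 else 0) * v j) = lag tau p i 1 * v p"
  proof -
    have "(\<Sum>j\<le>p. (if i = p \<and> j = p then 1 else 0) * v j) = (\<Sum>j\<le>p. if j = p then (if i = p then v j else 0) else 0)"
      by (intro sum.cong) auto
    then show ?thesis using lag1[OF i] by simp
  qed
  also have "(\<Sum>j\<le>p. integral {-1..1} (\<lambda>x. poly (pderiv (lagp i)) x * poly (lagp j) x) * v j)
      = (\<Sum>j\<le>p. integral {-1..1} (\<lambda>x. poly (pderiv (lagp i)) x * poly (lagp j) x * v j))"
    by (simp add: integral_mult_left)
  also have "\<dots> = integral {-1..1} (\<lambda>x. \<Sum>j\<le>p. poly (pderiv (lagp i)) x * poly (lagp j) x * v j)"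
    by (rule integral_sum[symmetric]) (auto intro!: integrable_continuous_interval continuous_intros cont_poly)
  also have "\<dots> = integral {-1..1} (\<lambda>x. poly (pderiv (lagp i)) x * poly (Qp v) x)"
    by (simp add: poly_Qp sum_distrib_left mult_ac poly_lagp)
  finally show ?thesis .
qed

lemma Lquad: "(\<Sum>i\<le>p. c i * (\<Sum>j\<le>p. Lmat tau p i j * v j))
   = integral {-1..1} (\<lambda>x. poly (pderiv (Qp c)) x * poly (Qp v) x) - poly (Qp c) 1 * poly (Qp v) 1"
proof -
  have "(\<Sum>i\<le>p. c i * (\<Sum>j\<le>p. Lmat tau p i j * v j))
     = (\<Sum>i\<le>p. c i * integral {-1..1} (\<lambda>x. poly (pderiv (lagp i)) x * poly (Qp v) x))
       - (\<Sum>i\<le>p. c i * lag tau p i 1) * v p"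
  proof -
    have "(\<Sum>i\<le>p. c i * (\<Sum>j\<le>p. Lmat tau p i j * v j))
       = (\<Sum>i\<le>p. c i * (integral {-1..1} (\<lambda>x. poly (pderiv (lagp i)) x * poly (Qp v) x) - lag tau p i 1 * v p))"
      by (intro sum.cong refl) (simp add: Ldot)
    then show ?thesis by (simp add: right_diff_distrib sum_subtractf sum_distrib_right mult.assoc)
  qed
  also have "(\<Sum>i\<le>p. c i * integral {-1..1} (\<lambda>x. poly (pderiv (lagp i)) x * poly (Qp v) x))
     = integral {-1..1} (\<lambda>x. \<Sum>i\<le>p. c i * (poly (pderiv (lagp i)) x * poly (Qp v) x))"
    by (subst integral_sum) (auto intro!: integrable_continuous_interval continuous_intros cont_poly)
  also have "\<dots> = integral {-1..1} (\<lambda>x. poly (pderiv (Qp c)) x * poly (Qp v) x)"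
    by (simp add: pderiv_Qp poly_sum sum_distrib_left sum_distrib_right mult_ac)
  finally show ?thesis using Qp1[of v] poly_Qp[of c 1] by simp
qed

lemma L_inj: assumes h: "\<forall>i\<le>p. (\<Sum>j\<le>p. Lmat tau p i j * v j) = 0" and j: "j \<le> p"
  shows "v j = 0"
proof -
  define q where "q = Qp v"
  have z: "(\<Sum>i\<le>p. c i * (\<Sum>j\<le>p. Lmat tau p i j * v j)) = 0" for c
    using h by simp
  have a: "integral {-1..1} (\<lambda>x. poly (pderiv q) x * poly q x) - poly q 1 * poly q 1 = 0"
    using z[of v] unfolding Lquad q_def .
  have b: "integral {-1..1} (\<lambda>x. poly (pderiv q) x * poly q x)
     = poly q 1 * poly q 1 - poly q (-1) * poly q (-1) - integral {-1..1} (\<lambda>x. poly (pderiv q) x * poly q x)"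
    using ibp[of q q] by (simp add: mult_ac)
  have "poly q 1 * poly q 1 + poly q (-1) * poly q (-1) = 0" using a b by linarith
  then have q1: "poly q 1 = 0" and qm1: "poly q (-1) = 0"
    by (metis add_nonneg_eq_0_iff mult_eq_0_iff zero_le_square)+
  define c where "c i = poly (pderiv q) (tau i)" for i
  have dq: "degree (pderiv q) \<le> p" using degree_Qp[of v] unfolding q_def
    by (metis degree_pderiv le_diff_conv le_add1 order_trans le_trans diff_le_self)
  have pc: "poly (Qp c) x = poly (pderiv q) x" for x
    using interp[OF dq, of x] by (simp add: poly_Qp c_def)
  then have Qc: "Qp c = pderiv q" by (metis poly_eq_poly_eq_iff ext)
  have "integral {-1..1} (\<lambda>x. poly (pderiv (pderiv q)) x * poly q x) - poly (pderiv q) 1 * poly q 1 = 0"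
    using z[of c] unfolding Lquad Qc q_def .
  then have "integral {-1..1} (\<lambda>x. poly (pderiv q) x * poly (pderiv q) x) = 0"
    using ibp[of "pderiv q" q] q1 qm1 by simp
  then have hi: "((\<lambda>x. poly (pderiv q) x * poly (pderiv q) x) has_integral 0) (cbox (-1) 1)"
    using int_poly2[of "pderiv q" "pderiv q" "-1" 1]
    by (metis box_real(2) has_integral_integral)
  have pz: "poly (pderiv q) x = 0" if "x \<in> {-1..1}" for x
  proof -
    have "poly (pderiv q) x * poly (pderiv q) x = 0"
      by (rule has_integral_0_cbox_imp_0[OF _ _ hi])
         (use that in \<open>auto intro!: continuous_intros cont_poly\<close>)
    then show ?thesis by simp
  qed
  have "pderiv q = 0"
  proof (rule ccontr)
    assume "pderiv q \<noteq> 0"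
    then have "finite {x. poly (pderiv q) x = 0}" by (rule poly_roots_finite)
    moreover have "{-1..1::real} \<subseteq> {x. poly (pderiv q) x = 0}" using pz by auto
    ultimately have "finite {-1..1::real}" by (rule finite_subset[rotated])
    then show False using infinite_Icc[of "-1::real" 1] by simp
  qed
  then obtain h where "q = [:h:]" using pderiv_iszero by blast
  then have "poly q (tau j) = poly q 1" by simp
  then show ?thesis using Qp_node[OF j] q1 unfolding q_def by simp
qed

lemma L_one: assumes i: "i \<le> p" shows "(\<Sum>j\<le>p. Lmat tau p i j) = - lag tau p i (-1)"
proof -
  have "poly (Qp (\<lambda>_. 1)) x = 1" for x by (simp add: poly_Qp sum_lag)
  then have "(\<Sum>j\<le>p. Lmat tau p i j * 1) = integral {-1..1} (poly (pderiv (lagp i))) - lag tau p i 1"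
    using Ldot[OF i, of "\<lambda>_. 1"] by simp
  then show ?thesis by (simp add: ftc_poly poly_lagp)
qed

lemma L_tau: assumes i: "i \<le> p"
  shows "(\<Sum>j\<le>p. Lmat tau p i j * (tau j + 1)) = - integral {-1..1} (lag tau p i)"
proof (cases "p = 0")
  case True
  then have i0: "i = 0" using i by simp
  have "{..p}-{0} = {}" using True by auto
  then have lp: "lagp 0 = 1" unfolding lagp_def by (simp only: \<open>{..p}-{0} = {}\<close> prod.empty)
  have "lag tau p 0 = (\<lambda>_. 1)" using lp by (simp add: lag_poly fun_eq_iff)
  moreover have L00: "Lmat tau p 0 0 = -1" unfolding Lmat_eq lp using True by simp
  moreover have "(\<Sum>j\<le>p. Lmat tau p i j * (tau j + 1)) = Lmat tau p 0 0 * (tau 0 + 1)" using True i0 by simp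
  ultimately show ?thesis using True i0 last by simp
next
  case False
  have "poly (Qp (\<lambda>j. tau j + 1)) x = poly [:1,1:] x" for x
  proof -
    have "poly [:1,1:] x = (\<Sum>i\<le>p. poly [:1,1:] (tau i) * lag tau p i x)"
      by (rule interp) (use False in simp)
    also have "\<dots> = (\<Sum>j\<le>p. (tau j + 1) * lag tau p j x)"
      by (intro sum.cong refl) simp
    finally have e1: "poly [:1,1:] x = (\<Sum>j\<le>p. (tau j + 1) * lag tau p j x)" .
    have e2: "poly (Qp (\<lambda>j. tau j + 1)) x = (\<Sum>j\<le>p. (tau j + 1) * lag tau p j x)" by (rule poly_Qp)
    show ?thesis by (rule trans[OF e2 e1[symmetric]])
  qed
  then have "Qp (\<lambda>j. tau j + 1) = [:1,1:]" by (metis poly_eq_poly_eq_iff ext)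
  then have "(\<Sum>j\<le>p. Lmat tau p i j * (tau j + 1))
      = integral {-1..1} (\<lambda>x. poly (pderiv (lagp i)) x * poly [:1,1:] x) - lag tau p i 1 * 2"
    using Ldot[OF i, of "\<lambda>j. tau j + 1"] last by simp
  also have "\<dots> = - integral {-1..1} (lag tau p i)"
    using ibp[of "lagp i" "[:1,1:]"] by (simp add: pderiv_pCons lag_poly)
  finally show ?thesis .
qed

end



context radau begin

lemma Linv_exists: "\<exists>V. (\<forall>i\<le>p. (\<Sum>j\<le>p. Lmat tau p i j * V j) = r i) \<and> (\<forall>i>p. V i = 0)"
proof -
  define n where "n = Suc p"
  define A :: "real mat" where "A = Matrix.mat n n (\<lambda>(i,j). Lmat tau p i j)"
  have A: "A \<in> carrier_mat n n" unfolding A_def by simp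
  have sumeq: "(\<Sum>j\<in>{0..<n}. f j) = (\<Sum>j\<le>p. f j)" for f :: "nat \<Rightarrow> real"
    unfolding n_def by (simp add: atLeast0LessThan lessThan_Suc_atMost)
  have Av: "(A *\<^sub>v v) $ i = (\<Sum>j\<le>p. Lmat tau p i j * v $ j)" if "i \<le> p" "v \<in> carrier_vec n" for v i
    using that A by (simp add: A_def n_def scalar_prod_def lessThan_Suc_atMost[symmetric] atLeast0LessThan)
  have "Determinant.det A \<noteq> 0"
  proof
    assume "Determinant.det A = 0"
    then obtain v where v: "v \<in> carrier_vec n" "v \<noteq> 0\<^sub>v n" "A *\<^sub>v v = 0\<^sub>v n"
      using det_0_iff_vec_prod_zero_field[OF A] by blast
    define w where "w j = (if j \<le> p then v $ j else 0)" for j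
    have "\<forall>i\<le>p. (\<Sum>j\<le>p. Lmat tau p i j * w j) = 0"
    proof (intro allI impI)
      fix i assume i: "i \<le> p"
      have "(\<Sum>j\<le>p. Lmat tau p i j * w j) = (A *\<^sub>v v) $ i"
        using Av[OF i v(1)] by (simp add: w_def)
      also have "\<dots> = 0" using v(3) i by (simp add: n_def)
      finally show "(\<Sum>j\<le>p. Lmat tau p i j * w j) = 0" .
    qed
    then have "w j = 0" if "j \<le> p" for j using L_inj that by blast
    then have "v = 0\<^sub>v n" using v(1) by (intro eq_vecI) (auto simp: w_def n_def)
    then show False using v(2) by simp
  qed
  then have "A \<in> Units (ring_mat TYPE(real) n ())" by (rule det_non_zero_imp_unit[OF A])
  then obtain B where B: "B \<in> carrier_mat n n" "A * B = 1\<^sub>m n"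
    by (auto simp: Units_def ring_mat_def)
  define V where "V = B *\<^sub>v vec n r"
  have Vc: "V \<in> carrier_vec n" using B(1) by (simp add: V_def)
  have AV: "A *\<^sub>v V = vec n r"
    unfolding V_def using A B by (simp add: assoc_mult_mat_vec[symmetric])
  define W where "W j = (if j \<le> p then V $ j else 0)" for j
  show ?thesis
  proof (intro exI conjI allI impI)
    fix i assume i: "i \<le> p"
    have "(\<Sum>j\<le>p. Lmat tau p i j * W j) = (A *\<^sub>v V) $ i"
      using Av[OF i Vc] by (simp add: W_def)
    also have "\<dots> = r i" using AV i by (simp add: n_def)
    finally show "(\<Sum>j\<le>p. Lmat tau p i j * W j) = r i" .
  next
    fix i assume "p < i" then show "W i = 0" by (simp add: W_def)
  qed
qed

lemma Linv_unique: assumes "\<forall>i\<le>p. (\<Sum>j\<le>p. Lmat tau p i j * V j) = r i"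
    "\<forall>i\<le>p. (\<Sum>j\<le>p. Lmat tau p i j * W j) = r i" "m \<le> p"
  shows "V m = W m"
proof -
  have "\<forall>i\<le>p. (\<Sum>j\<le>p. Lmat tau p i j * (V j - W j)) = 0"
    using assms(1,2) by (simp add: right_diff_distrib sum_subtractf)
  from L_inj[OF this assms(3)] show ?thesis by simp
qed

lemma Linv_spec: "(\<forall>i\<le>p. (\<Sum>j\<le>p. Lmat tau p i j * Linv_apply tau p r j) = r i) \<and> (\<forall>i>p. Linv_apply tau p r i = 0)"
proof -
  have "\<exists>!V. (\<forall>i\<le>p. (\<Sum>j\<le>p. Lmat tau p i j * V j) = r i) \<and> (\<forall>i>p. V i = 0)"
  proof (rule ex_ex1I)
    show "\<exists>V. (\<forall>i\<le>p. (\<Sum>j\<le>p. Lmat tau p i j * V j) = r i) \<and> (\<forall>i>p. V i = 0)" by (rule Linv_exists)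
  next
    fix V W assume V: "(\<forall>i\<le>p. (\<Sum>j\<le>p. Lmat tau p i j * V j) = r i) \<and> (\<forall>i>p. V i = 0)"
      and W: "(\<forall>i\<le>p. (\<Sum>j\<le>p. Lmat tau p i j * W j) = r i) \<and> (\<forall>i>p. W i = 0)"
    show "V = W"
    proof
      fix m show "V m = W m"
        using V W Linv_unique[of V r W m] by (cases "m \<le> p") auto
    qed
  qed
  then show ?thesis unfolding Linv_apply_def by (rule theI')
qed

lemma Linv_char: assumes "\<forall>i\<le>p. (\<Sum>j\<le>p. Lmat tau p i j * V j) = r i" "m \<le> p"
  shows "Linv_apply tau p r m = V m"
  using Linv_unique[OF conjunct1[OF Linv_spec] assms(1) assms(2)] .

lemma Linv_lin: assumes m: "m \<le> p"
  shows "Linv_apply tau p (\<lambda>i. a * r i + b * s i) m = a * Linv_apply tau p r m + b * Linv_apply tau p s m"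
proof (rule Linv_char[OF _ m], intro allI impI)
  fix i assume i: "i \<le> p"
  have "(\<Sum>j\<le>p. Lmat tau p i j * (a * Linv_apply tau p r j + b * Linv_apply tau p s j))
     = a * (\<Sum>j\<le>p. Lmat tau p i j * Linv_apply tau p r j) + b * (\<Sum>j\<le>p. Lmat tau p i j * Linv_apply tau p s j)"
    by (simp add: distrib_left sum.distrib sum_distrib_left mult_ac)
  also have "\<dots> = a * r i + b * s i" using Linv_spec i by simp
  finally show "(\<Sum>j\<le>p. Lmat tau p i j * (a * Linv_apply tau p r j + b * Linv_apply tau p s j)) = a * r i + b * s i" .
qed

lemma Linv_bound: "\<exists>\<kappa>\<ge>0. \<forall>r R m. (\<forall>i\<le>p. \<bar>r i\<bar> \<le> R) \<longrightarrow> m \<le> p \<longrightarrow> \<bar>Linv_apply tau p r m\<bar> \<le> \<kappa> * R"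
proof -
  define e where "e i = (\<lambda>k::nat. if k = i then 1 else (0::real))" for i :: nat
  define \<kappa> where "\<kappa> = (\<Sum>i\<le>p. \<Sum>m\<le>p. \<bar>Linv_apply tau p (e i) m\<bar>)"
  have rep: "Linv_apply tau p r m = (\<Sum>i\<le>p. r i * Linv_apply tau p (e i) m)" if m: "m \<le> p" for r m
  proof (rule Linv_char[OF _ m], intro allI impI)
    fix k assume k: "k \<le> p"
    have "(\<Sum>j\<le>p. Lmat tau p k j * (\<Sum>i\<le>p. r i * Linv_apply tau p (e i) j))
       = (\<Sum>i\<le>p. r i * (\<Sum>j\<le>p. Lmat tau p k j * Linv_apply tau p (e i) j))"
    proof -
      have "(\<Sum>j\<le>p. Lmat tau p k j * (\<Sum>i\<le>p. r i * Linv_apply tau p (e i) j))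
         = (\<Sum>j\<le>p. \<Sum>i\<le>p. Lmat tau p k j * (r i * Linv_apply tau p (e i) j))"
        by (simp add: sum_distrib_left)
      also have "\<dots> = (\<Sum>i\<le>p. \<Sum>j\<le>p. Lmat tau p k j * (r i * Linv_apply tau p (e i) j))"
        by (rule sum.swap)
      also have "\<dots> = (\<Sum>i\<le>p. r i * (\<Sum>j\<le>p. Lmat tau p k j * Linv_apply tau p (e i) j))"
        by (simp add: sum_distrib_left mult.left_commute)
      finally show ?thesis .
    qed
    also have "\<dots> = (\<Sum>i\<le>p. r i * e i k)" using Linv_spec k by simp
    also have "\<dots> = (\<Sum>i\<le>p. if k = i then r i else 0)" by (intro sum.cong) (auto simp: e_def)
    also have "\<dots> = r k" using k by simp
    finally show "(\<Sum>j\<le>p. Lmat tau p k j * (\<Sum>i\<le>p. r i * Linv_apply tau p (e i) j)) = r k" .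
  qed
  show ?thesis
  proof (intro exI conjI allI impI)
    show "0 \<le> \<kappa>" unfolding \<kappa>_def by (intro sum_nonneg) auto
  next
    fix r :: "nat \<Rightarrow> real" and R :: real and m :: nat
    assume R: "\<forall>i\<le>p. \<bar>r i\<bar> \<le> R" and m: "m \<le> p"
    have "\<bar>r 0\<bar> \<le> R" using R by simp
    then have R0: "0 \<le> R" using abs_ge_zero[of "r 0"] by linarith
    have "\<bar>Linv_apply tau p r m\<bar> \<le> (\<Sum>i\<le>p. \<bar>r i * Linv_apply tau p (e i) m\<bar>)"
      unfolding rep[OF m, of r] by (rule sum_abs)
    also have "\<dots> \<le> (\<Sum>i\<le>p. R * \<bar>Linv_apply tau p (e i) m\<bar>)"
    proof (intro sum_mono)
      fix i assume "i \<in> {..p}"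
      then have "\<bar>r i\<bar> \<le> R" using R by simp
      then have "\<bar>r i\<bar> * \<bar>Linv_apply tau p (e i) m\<bar> \<le> R * \<bar>Linv_apply tau p (e i) m\<bar>"
        by (rule mult_right_mono) simp
      then show "\<bar>r i * Linv_apply tau p (e i) m\<bar> \<le> R * \<bar>Linv_apply tau p (e i) m\<bar>"
        by (simp only: abs_mult)
    qed
    also have "\<dots> = R * (\<Sum>i\<le>p. \<bar>Linv_apply tau p (e i) m\<bar>)" by (simp add: sum_distrib_left)
    also have "\<dots> \<le> R * \<kappa>" unfolding \<kappa>_def
    proof (intro mult_left_mono R0 sum_mono)
      fix i assume "i \<in> {..p}"
      show "\<bar>Linv_apply tau p (e i) m\<bar> \<le> (\<Sum>m\<le>p. \<bar>Linv_apply tau p (e i) m\<bar>)"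
        using m by (intro member_le_sum) auto
    qed
    finally show "\<bar>Linv_apply tau p r m\<bar> \<le> \<kappa> * R" by (simp add: mult.commute)
  qed
qed

lemma Linv_B: assumes "m \<le> p" shows "Linv_apply tau p (Bvec tau p un) m = - un"
proof -
  have "Linv_apply tau p (Bvec tau p un) m = (\<lambda>_. - un) m"
  proof (rule Linv_char[OF _ assms], intro allI impI)
    fix i assume i: "i \<le> p"
    have "(\<Sum>j\<le>p. Lmat tau p i j * (\<lambda>_. - un) j) = (\<Sum>j\<le>p. Lmat tau p i j) * (- un)"
      by (simp only: sum_distrib_right)
    also have "\<dots> = Bvec tau p un i" using L_one[OF i] by (simp add: Bvec_def)
    finally show "(\<Sum>j\<le>p. Lmat tau p i j * (\<lambda>_. - un) j) = Bvec tau p un i" .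
  qed
  then show ?thesis by simp
qed

lemma Linv_int: assumes "m \<le> p"
  shows "Linv_apply tau p (\<lambda>j. integral {-1..1} (lag tau p j)) m = - (tau m + 1)"
proof -
  have "Linv_apply tau p (\<lambda>j. integral {-1..1} (lag tau p j)) m = (\<lambda>j. - (tau j + 1)) m"
  proof (rule Linv_char[OF _ assms], intro allI impI)
    fix i assume i: "i \<le> p"
    have "(\<Sum>j\<le>p. Lmat tau p i j * (\<lambda>j. - (tau j + 1)) j) = - (\<Sum>j\<le>p. Lmat tau p i j * (tau j + 1))"
      by (simp only: mult_minus_right sum_negf)
    also have "\<dots> = integral {-1..1} (lag tau p i)" using L_tau[OF i] by simp
    finally show "(\<Sum>j\<le>p. Lmat tau p i j * (\<lambda>j. - (tau j + 1)) j) = integral {-1..1} (lag tau p i)" .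
  qed
  then show ?thesis by simp
qed

end



locale est = radau +
  fixes f :: "real \<Rightarrow> real \<Rightarrow> real" and Lc A \<kappa> :: real
  assumes Lc0: "0 \<le> Lc" and lip: "\<forall>t x y. \<bar>f t x - f t y\<bar> \<le> Lc * \<bar>x - y\<bar>"
    and fcont: "continuous_on UNIV (\<lambda>(t, x). f t x)"
    and A0: "0 \<le> A" and Abnd: "\<forall>j\<le>p. \<forall>x\<in>{-1..1}. \<bar>lag tau p j x\<bar> \<le> A"
    and k0: "0 \<le> \<kappa>" and kbnd: "\<forall>r R m. (\<forall>i\<le>p. \<bar>r i\<bar> \<le> R) \<longrightarrow> m \<le> p \<longrightarrow> \<bar>Linv_apply tau p r m\<bar> \<le> \<kappa> * R"
begin

abbreviation "P \<equiv> real (Suc p)"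

lemma contf: "continuous_on S (\<lambda>x. f (a x) (b x))" if "continuous_on S a" "continuous_on S b"
proof -
  have "continuous_on S (\<lambda>x. (\<lambda>(t, x). f t x) (a x, b x))"
    by (rule continuous_on_compose2[OF fcont]) (auto intro: continuous_intros that)
  then show ?thesis by simp
qed

lemma cont_lag: "continuous_on S (lag tau p j)"
  unfolding lag_poly by (rule cont_poly)

lemma cont_integrand: "continuous_on S (\<lambda>x. f (tn + (x + 1) * dt / 2) (\<Sum>m\<le>p. U m * lag tau p m x) * lag tau p j x)"
  unfolding lag_poly by (intro continuous_intros contf cont_poly) auto

lemma sumbound: assumes w: "\<forall>m\<le>p. \<bar>w m\<bar> \<le> e" and x: "x \<in> {-1..1}"
  shows "\<bar>\<Sum>m\<le>p. w m * lag tau p m x\<bar> \<le> P * A * e"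
proof -
  have "\<bar>\<Sum>m\<le>p. w m * lag tau p m x\<bar> \<le> (\<Sum>m\<le>p. \<bar>w m * lag tau p m x\<bar>)" by (rule sum_abs)
  also have "\<dots> \<le> (\<Sum>m\<le>p. e * A)"
  proof (intro sum_mono)
    fix m assume "m \<in> {..p}"
    then have "\<bar>w m\<bar> \<le> e" "\<bar>lag tau p m x\<bar> \<le> A" using w Abnd x by auto
    then show "\<bar>w m * lag tau p m x\<bar> \<le> e * A" unfolding abs_mult
      by (intro mult_mono) auto
  qed
  also have "\<dots> = P * A * e" by simp
  finally show ?thesis .
qed

lemma intbound: fixes g :: "real \<Rightarrow> real" assumes "continuous_on {-1..1} g" "\<forall>x\<in>{-1..1}. \<bar>g x\<bar> \<le> B"
  shows "\<bar>integral {-1..1} g\<bar> \<le> 2 * B"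
  using integral_bound[of "-1" 1 g B] assms by (simp add: mult.commute)

lemma F_diff: assumes e: "\<forall>m\<le>p. \<bar>U m - V m\<bar> \<le> e" and j: "j \<le> p"
  shows "\<bar>Fvec f tau p tn dt U j - Fvec f tau p tn dt V j\<bar> \<le> 2 * (Lc * (P * A * e) * A)"
proof -
  let ?g = "\<lambda>U x. f (tn + (x + 1) * dt / 2) (\<Sum>m\<le>p. U m * lag tau p m x) * lag tau p j x"
  have "Fvec f tau p tn dt U j - Fvec f tau p tn dt V j = integral {-1..1} (\<lambda>x. ?g U x - ?g V x)"
    unfolding Fvec_def
    by (rule integral_diff[symmetric]) (auto intro!: integrable_continuous_interval cont_integrand)
  also have "\<bar>\<dots>\<bar> \<le> 2 * (Lc * (P * A * e) * A)"
  proof (rule intbound)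
    show "continuous_on {-1..1} (\<lambda>x. ?g U x - ?g V x)" by (intro continuous_intros cont_integrand)
  next
    show "\<forall>x\<in>{-1..1}. \<bar>?g U x - ?g V x\<bar> \<le> Lc * (P * A * e) * A"
    proof
      fix x :: real assume x: "x \<in> {-1..1}"
      let ?s = "tn + (x + 1) * dt / 2"
      have "\<bar>(\<Sum>m\<le>p. U m * lag tau p m x) - (\<Sum>m\<le>p. V m * lag tau p m x)\<bar>
          = \<bar>\<Sum>m\<le>p. (U m - V m) * lag tau p m x\<bar>"
        by (simp add: sum_subtractf left_diff_distrib)
      also have "\<dots> \<le> P * A * e" using sumbound[OF _ x, of "\<lambda>m. U m - V m" e] e by simp
      finally have d: "\<bar>(\<Sum>m\<le>p. U m * lag tau p m x) - (\<Sum>m\<le>p. V m * lag tau p m x)\<bar> \<le> P * A * e" .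
      have "\<bar>f ?s (\<Sum>m\<le>p. U m * lag tau p m x) - f ?s (\<Sum>m\<le>p. V m * lag tau p m x)\<bar> \<le> Lc * (P * A * e)"
        using lip d Lc0 by (meson mult_left_mono order_trans)
      moreover have "\<bar>lag tau p j x\<bar> \<le> A" using Abnd j x by auto
      ultimately have "\<bar>f ?s (\<Sum>m\<le>p. U m * lag tau p m x) - f ?s (\<Sum>m\<le>p. V m * lag tau p m x)\<bar> * \<bar>lag tau p j x\<bar>
           \<le> Lc * (P * A * e) * A"
        by (intro mult_mono) auto
      then show "\<bar>?g U x - ?g V x\<bar> \<le> Lc * (P * A * e) * A"
        by (simp add: left_diff_distrib[symmetric] abs_mult)
    qed
  qed
  finally show ?thesis .
qed

lemma F_base: assumes d: "\<forall>m\<le>p. \<bar>U m - un\<bar> \<le> d" and j: "j \<le> p" and dt: "0 \<le> dt"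
  and Ml: "\<forall>s\<in>{tn..tn+dt}. \<bar>f s un - f tn un\<bar> \<le> M * (s - tn)" and M0: "0 \<le> M"
  shows "\<bar>Fvec f tau p tn dt U j - f tn un * integral {-1..1} (lag tau p j)\<bar> \<le> 2 * ((M * dt + Lc * (P * A * d)) * A)"
proof -
  let ?g = "\<lambda>x. f (tn + (x + 1) * dt / 2) (\<Sum>m\<le>p. U m * lag tau p m x) * lag tau p j x"
  have "Fvec f tau p tn dt U j - f tn un * integral {-1..1} (lag tau p j)
      = integral {-1..1} (\<lambda>x. ?g x - f tn un * lag tau p j x)"
    unfolding Fvec_def
    by (subst integral_diff) (auto intro!: integrable_continuous_interval cont_integrand continuous_intros cont_lag)
  also have "\<bar>\<dots>\<bar> \<le> 2 * ((M * dt + Lc * (P * A * d)) * A)"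
  proof (rule intbound)
    show "continuous_on {-1..1} (\<lambda>x. ?g x - f tn un * lag tau p j x)"
      by (intro continuous_intros cont_integrand cont_lag)
  next
    show "\<forall>x\<in>{-1..1}. \<bar>?g x - f tn un * lag tau p j x\<bar> \<le> (M * dt + Lc * (P * A * d)) * A"
    proof
      fix x :: real assume x: "x \<in> {-1..1}"
      let ?s = "tn + (x + 1) * dt / 2"
      have "(\<Sum>m\<le>p. U m * lag tau p m x) - un = (\<Sum>m\<le>p. (U m - un) * lag tau p m x)"
        using sum_lag[of x] by (simp add: sum_subtractf left_diff_distrib sum_distrib_left[symmetric])
      also have "\<bar>\<dots>\<bar> \<le> P * A * d" using sumbound[OF _ x, of "\<lambda>m. U m - un" d] d by simp
      finally have dd: "\<bar>(\<Sum>m\<le>p. U m * lag tau p m x) - un\<bar> \<le> P * A * d" .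
      have e1: "\<bar>f ?s (\<Sum>m\<le>p. U m * lag tau p m x) - f ?s un\<bar> \<le> Lc * (P * A * d)"
        using lip dd Lc0 by (meson mult_left_mono order_trans)
      have q1: "0 \<le> (x+1)*dt" using x dt by (intro mult_nonneg_nonneg) auto
      have q2: "(x+1)*dt \<le> 2*dt" using x dt by (intro mult_right_mono) auto
      have sr: "?s \<in> {tn..tn+dt}" "?s - tn \<le> dt" using q1 q2 by auto
      have "\<bar>f ?s un - f tn un\<bar> \<le> M * (?s - tn)" using Ml sr by blast
      also have "\<dots> \<le> M * dt" using sr M0 by (intro mult_left_mono) auto
      finally have e2: "\<bar>f ?s un - f tn un\<bar> \<le> M * dt" .
      have "\<bar>f ?s (\<Sum>m\<le>p. U m * lag tau p m x) - f tn un\<bar> \<le> M * dt + Lc * (P * A * d)"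
        using e1 e2 by linarith
      moreover have "\<bar>lag tau p j x\<bar> \<le> A" using Abnd j x by auto
      ultimately have "\<bar>f ?s (\<Sum>m\<le>p. U m * lag tau p m x) - f tn un\<bar> * \<bar>lag tau p j x\<bar>
           \<le> (M * dt + Lc * (P * A * d)) * A"
        by (intro mult_mono) auto
      then show "\<bar>?g x - f tn un * lag tau p j x\<bar> \<le> (M * dt + Lc * (P * A * d)) * A"
        by (simp add: left_diff_distrib[symmetric] abs_mult)
    qed
  qed
  finally show ?thesis .
qed

lemma int_lag_bound: "j \<le> p \<Longrightarrow> \<bar>integral {-1..1} (lag tau p j)\<bar> \<le> 2 * A"
  using Abnd by (intro intbound cont_lag) auto

end



locale est2 = est +
  fixes F0 M :: real
  assumes F00: "0 \<le> F0" and M0: "0 \<le> M"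
begin

definition "W = Lc * F0 + M"
definition "ce m = (1 + Lc) ^ m * real m * W"
definition "Q = P * \<kappa> * A * Lc * P * A"
definition "h0 = 1 / (1 + 2 * Q)"
definition "D1 = 2 * (P * \<kappa> * A) * (F0 + M)"
definition "D2 = \<kappa> * (M + Lc * P * A * D1) * A"
definition "G = \<kappa> * Lc * P * A * A"
definition "CK K = G ^ K * (D2 + ce p)"

lemma W0: "0 \<le> W" unfolding W_def using Lc0 F00 M0 by simp
lemma Q0: "0 \<le> Q" unfolding Q_def using k0 A0 Lc0 by simp
lemma ce0: "0 \<le> ce m" unfolding ce_def using W0 Lc0 by simp
lemma G0: "0 \<le> G" unfolding G_def using k0 A0 Lc0 by simp
lemma D10: "0 \<le> D1" unfolding D1_def using k0 A0 F00 M0 by simp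
lemma h0_pos: "0 < h0" unfolding h0_def using Q0 by simp
lemma h0_le1: "h0 \<le> 1" unfolding h0_def using Q0 by simp
lemma h0Q: "h0 * Q \<le> 1/2" unfolding h0_def using Q0 by (simp add: field_simps)

lemma ce_mono: "m \<le> n \<Longrightarrow> ce m \<le> ce n"
  unfolding ce_def using W0 Lc0
  by (intro mult_right_mono mult_mono power_increasing) auto

lemma ce_step: "ce m * (1 + Lc) + W \<le> ce (Suc m)"
proof -
  have "1 \<le> (1 + Lc) ^ Suc m" using Lc0 by (intro one_le_power) simp
  then have "1 * W \<le> (1 + Lc) ^ Suc m * W" by (rule mult_right_mono[OF _ W0])
  then have "W \<le> (1 + Lc) ^ Suc m * W" by simp
  then show ?thesis unfolding ce_def by (simp add: algebra_simps)
qed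

lemma node_diff: "node tau tn dt m - tn = (tau m + 1) * dt / 2"
  by (simp add: node_def)

lemma node_range: assumes "m \<le> p" "0 \<le> dt" shows "0 \<le> node tau tn dt m - tn" "node tau tn dt m - tn \<le> dt"
proof -
  have t: "-1 < tau m" "tau m \<le> 1" using tau_range[OF assms(1)] by auto
  have "0 \<le> (tau m + 1) * dt" using t assms(2) by simp
  moreover have "(tau m + 1) * dt \<le> 2 * dt" using t assms(2) by (intro mult_right_mono) auto
  ultimately show "0 \<le> node tau tn dt m - tn" "node tau tn dt m - tn \<le> dt" by (auto simp: node_diff)
qed

lemma node_step: assumes "m < p" "0 \<le> dt"
  shows "0 \<le> node tau tn dt (Suc m) - node tau tn dt m" "node tau tn dt (Suc m) - node tau tn dt m \<le> dt"
proof -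
  have a: "node tau tn dt (Suc m) - node tau tn dt m = (tau (Suc m) - tau m) * dt / 2" by (simp add: node_def field_simps)
  have t: "tau m < tau (Suc m)" "-1 < tau m" "tau (Suc m) \<le> 1" using mono assms tau_range[of m] tau_range[of "Suc m"] by auto
  have "0 \<le> (tau (Suc m) - tau m) * dt" using t assms(2) by simp
  moreover have "(tau (Suc m) - tau m) * dt \<le> 2 * dt" using t assms(2) by (intro mult_right_mono) auto
  ultimately show "0 \<le> node tau tn dt (Suc m) - node tau tn dt m" "node tau tn dt (Suc m) - node tau tn dt m \<le> dt"
    by (auto simp: a)
qed

lemma euler_err:
  assumes dt: "0 < dt" "dt \<le> h" "h \<le> 1" and F0: "\<bar>f tn un\<bar> \<le> F0"
    and Ml: "\<forall>s\<in>{tn..tn+dt}. \<bar>f s un - f tn un\<bar> \<le> M * (s - tn)"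
  shows "m \<le> p \<Longrightarrow> \<bar>euler0 f tau tn dt un m - un - (node tau tn dt m - tn) * f tn un\<bar> \<le> ce m * h\<^sup>2"
proof (induction m)
  case 0 then show ?case by (simp add: ce_def)
next
  case (Suc m)
  let ?e = "euler0 f tau tn dt un m" and ?n = "node tau tn dt m" and ?n1 = "node tau tn dt (Suc m)"
  let ?f0 = "f tn un"
  define E where "E = ?e - un - (?n - tn) * ?f0"
  have mp: "m < p" using Suc.prems by simp
  have IH: "\<bar>E\<bar> \<le> ce m * h\<^sup>2" using Suc.IH mp unfolding E_def by simp
  have nr: "0 \<le> ?n - tn" "?n - tn \<le> dt" using node_range[of m dt tn] mp dt by auto
  have ns: "0 \<le> ?n1 - ?n" "?n1 - ?n \<le> dt" using node_step[OF mp, of dt tn] dt by auto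
  have h0: "0 \<le> h" using dt by simp
  have "\<bar>(?n - tn) * ?f0\<bar> \<le> h * F0"
    unfolding abs_mult using nr F0 dt by (intro mult_mono) auto
  then have eu: "\<bar>?e - un\<bar> \<le> ce m * h\<^sup>2 + h * F0" using IH unfolding E_def by linarith
  have "\<bar>f ?n ?e - f ?n un\<bar> \<le> Lc * \<bar>?e - un\<bar>" using lip by blast
  also have "\<dots> \<le> Lc * (ce m * h\<^sup>2 + h * F0)" using eu Lc0 by (rule mult_left_mono)
  finally have f1: "\<bar>f ?n ?e - f ?n un\<bar> \<le> Lc * (ce m * h\<^sup>2 + h * F0)" .
  have "?n \<in> {tn..tn+dt}" using nr by auto
  then have "\<bar>f ?n un - ?f0\<bar> \<le> M * (?n - tn)" using Ml by blast
  also have "\<dots> \<le> M * h" using nr dt M0 by (intro mult_left_mono) auto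
  finally have f2: "\<bar>f ?n un - ?f0\<bar> \<le> M * h" .
  have fY: "\<bar>f ?n ?e - ?f0\<bar> \<le> Lc * (ce m * h\<^sup>2 + h * F0) + M * h" using f1 f2 by linarith
  have "\<bar>(?n1 - ?n) * (f ?n ?e - ?f0)\<bar> \<le> h * (Lc * (ce m * h\<^sup>2 + h * F0) + M * h)"
    unfolding abs_mult using ns fY dt by (intro mult_mono) auto
  also have "\<dots> = Lc * ce m * h\<^sup>2 * h + h\<^sup>2 * (Lc * F0 + M)" by (simp add: algebra_simps power2_eq_square)
  also have "\<dots> \<le> Lc * ce m * h\<^sup>2 * 1 + h\<^sup>2 * (Lc * F0 + M)"
    using dt Lc0 ce0[of m] by (intro add_mono mult_left_mono) auto
  finally have st: "\<bar>(?n1 - ?n) * (f ?n ?e - ?f0)\<bar> \<le> Lc * ce m * h\<^sup>2 + h\<^sup>2 * W" by (simp add: W_def)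
  have eq: "euler0 f tau tn dt un (Suc m) - un - (?n1 - tn) * ?f0 = E + (?n1 - ?n) * (f ?n ?e - ?f0)"
    unfolding E_def by (simp add: algebra_simps)
  have "\<bar>euler0 f tau tn dt un (Suc m) - un - (?n1 - tn) * ?f0\<bar> \<le> ce m * h\<^sup>2 + (Lc * ce m * h\<^sup>2 + h\<^sup>2 * W)"
    unfolding eq using IH st by linarith
  also have "\<dots> = (ce m * (1 + Lc) + W) * h\<^sup>2" by (simp add: algebra_simps)
  also have "\<dots> \<le> ce (Suc m) * h\<^sup>2" using ce_step by (intro mult_right_mono) auto
  finally show ?case .
qed

end



context est2 begin

lemma Uh_rep: assumes dg: "dg_solution f tau p tn dt un Uh" and m: "m \<le> p"
  shows "Uh m = un - dt / 2 * Linv_apply tau p (Fvec f tau p tn dt Uh) m"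
proof -
  let ?F = "Fvec f tau p tn dt Uh" and ?B = "Bvec tau p un"
  have L: "\<forall>i\<le>p. (\<Sum>j\<le>p. Lmat tau p i j * Uh j) = (- (dt / 2)) * ?F i + (- 1) * ?B i"
    using dg unfolding dg_solution_def by (auto simp: algebra_simps)
  have "Uh m = Linv_apply tau p (\<lambda>i. (- (dt / 2)) * ?F i + (- 1) * ?B i) m"
    using Linv_char[OF L m] by simp
  also have "\<dots> = (- (dt / 2)) * Linv_apply tau p ?F m + (- 1) * Linv_apply tau p ?B m"
    by (rule Linv_lin[OF m])
  also have "\<dots> = un - dt / 2 * Linv_apply tau p ?F m" using Linv_B[OF m] by simp
  finally show ?thesis .
qed

lemma iter_rep: "m \<le> p \<Longrightarrow> fp_iter f tau p tn dt un (Suc k) m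
    = un - dt / 2 * Linv_apply tau p (Fvec f tau p tn dt (fp_iter f tau p tn dt un k)) m"
  using Linv_B by simp

lemma Linv_diff: "m \<le> p \<Longrightarrow> Linv_apply tau p r m - Linv_apply tau p s m = Linv_apply tau p (\<lambda>i. r i - s i) m"
  using Linv_lin[of m 1 r "-1" s] by simp

lemma step:
  assumes dt: "0 < dt" "dt \<le> h" "h \<le> h0" and F0: "\<bar>f tn un\<bar> \<le> F0"
    and Ml: "\<forall>s\<in>{tn..tn+dt}. \<bar>f s un - f tn un\<bar> \<le> M * (s - tn)"
    and dg: "dg_solution f tau p tn dt un Uh"
  shows "\<forall>m\<le>p. \<bar>Uh m - fp_iter f tau p tn dt un K m\<bar> \<le> CK K * h ^ (K + 2)"
proof -
  let ?f0 = "f tn un" and ?F = "Fvec f tau p tn dt Uh"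
  have h1: "h \<le> 1" using dt h0_le1 by simp
  have hpos: "0 < h" using dt by simp
  have dtQ: "dt * Q \<le> 1/2" using mult_right_mono[OF order_trans[OF dt(2) dt(3)] Q0] h0Q by simp
  define X where "X = P * \<kappa> * A"
  have X0: "0 \<le> X" unfolding X_def using k0 A0 by simp
  define d where "d = (\<Sum>m\<le>p. \<bar>Uh m - un\<bar>)"
  have dm: "\<forall>m\<le>p. \<bar>Uh m - un\<bar> \<le> d" unfolding d_def by (auto intro: member_le_sum)
  have d0: "0 \<le> d" unfolding d_def by (intro sum_nonneg) auto
  define R where "R = 2 * A * F0 + 2 * ((M * dt + Lc * (P * A * d)) * A)"
  have FR: "\<forall>i\<le>p. \<bar>?F i\<bar> \<le> R"
  proof (intro allI impI)
    fix i assume i: "i \<le> p"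
    have a: "\<bar>?F i - ?f0 * integral {-1..1} (lag tau p i)\<bar> \<le> 2 * ((M * dt + Lc * (P * A * d)) * A)"
      using F_base[OF dm i _ Ml M0] dt by simp
    have "\<bar>?f0 * integral {-1..1} (lag tau p i)\<bar> \<le> F0 * (2 * A)"
      unfolding abs_mult using F0 int_lag_bound[OF i] F00 by (intro mult_mono) auto
    moreover have "\<bar>?F i\<bar> \<le> \<bar>?F i - ?f0 * integral {-1..1} (lag tau p i)\<bar> + \<bar>?f0 * integral {-1..1} (lag tau p i)\<bar>"
      by (metis abs_triangle_ineq diff_add_cancel)
    moreover have "F0 * (2 * A) = 2 * A * F0" by simp
    ultimately show "\<bar>?F i\<bar> \<le> R" using a unfolding R_def by linarith
  qed
  have Um: "\<bar>Uh m - un\<bar> \<le> dt / 2 * (\<kappa> * R)" if m: "m \<le> p" for m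
  proof -
    have "\<bar>Uh m - un\<bar> = dt / 2 * \<bar>Linv_apply tau p ?F m\<bar>"
      using Uh_rep[OF dg m] dt by (simp add: abs_mult)
    also have "\<dots> \<le> dt / 2 * (\<kappa> * R)" using kbnd FR m dt by (intro mult_left_mono) auto
    finally show ?thesis .
  qed
  have "d \<le> real (card {..p}) * (dt / 2 * (\<kappa> * R))" unfolding d_def
    by (rule sum_bounded_above) (use Um in auto)
  also have "\<dots> = dt * X * (F0 + M * dt) + (dt * Q) * d"
    by (simp add: R_def X_def Q_def algebra_simps)
  finally have dA: "d \<le> dt * X * (F0 + M * dt) + (dt * Q) * d" .
  have "(dt * Q) * d \<le> (1/2) * d" using dtQ d0 by (rule mult_right_mono)
  moreover have "dt * X * (F0 + M * dt) \<le> h * X * (F0 + M)"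
  proof -
    have a1: "dt * X \<le> h * X" using dt X0 by (intro mult_right_mono) auto
    have "M * dt \<le> M" using dt h1 M0 by (simp add: mult_left_le)
    then have a2: "F0 + M * dt \<le> F0 + M" by simp
    show ?thesis by (rule mult_mono[OF a1 a2]) (use hpos X0 F00 M0 dt in auto)
  qed
  ultimately have dB: "d \<le> D1 * h" using dA unfolding D1_def X_def by (simp add: algebra_simps)
  have base: "\<bar>Uh m - un - (node tau tn dt m - tn) * ?f0\<bar> \<le> D2 * h\<^sup>2" if m: "m \<le> p" for m
  proof -
    let ?I = "\<lambda>i. integral {-1..1} (lag tau p i)"
    have "Uh m - un - (node tau tn dt m - tn) * ?f0
        = - (dt / 2) * (Linv_apply tau p ?F m - Linv_apply tau p (\<lambda>i. ?f0 * ?I i) m)"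
    proof -
      have "Linv_apply tau p (\<lambda>i. ?f0 * ?I i) m = ?f0 * Linv_apply tau p ?I m"
        using Linv_lin[OF m, of ?f0 ?I 0 ?I] by simp
      then have c1: "Linv_apply tau p (\<lambda>i. ?f0 * ?I i) m = - ?f0 * (tau m + 1)"
        using Linv_int[OF m] by (simp add: algebra_simps)
      show ?thesis unfolding c1 node_diff
        by (subst Uh_rep[OF dg m]) (simp add: algebra_simps)
    qed
    also have "\<dots> = - (dt / 2) * Linv_apply tau p (\<lambda>i. ?F i - ?f0 * ?I i) m"
      by (simp add: Linv_diff[OF m])
    finally have eq: "Uh m - un - (node tau tn dt m - tn) * ?f0 = - (dt / 2) * Linv_apply tau p (\<lambda>i. ?F i - ?f0 * ?I i) m" .
    define R2 where "R2 = 2 * ((M * h + Lc * (P * A * (D1 * h))) * A)"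
    have R2b: "\<forall>i\<le>p. \<bar>?F i - ?f0 * ?I i\<bar> \<le> R2"
    proof (intro allI impI)
      fix i assume i: "i \<le> p"
      have "\<bar>?F i - ?f0 * ?I i\<bar> \<le> 2 * ((M * dt + Lc * (P * A * d)) * A)"
        using F_base[OF dm i _ Ml M0] dt by simp
      also have "\<dots> \<le> R2" unfolding R2_def
        using dt dB M0 Lc0 A0 by (intro mult_left_mono mult_right_mono add_mono) auto
      finally show "\<bar>?F i - ?f0 * ?I i\<bar> \<le> R2" .
    qed
    have "\<bar>Uh m - un - (node tau tn dt m - tn) * ?f0\<bar> = dt / 2 * \<bar>Linv_apply tau p (\<lambda>i. ?F i - ?f0 * ?I i) m\<bar>"
      unfolding eq using dt by (simp add: abs_mult)
    also have "\<dots> \<le> dt / 2 * (\<kappa> * R2)" using kbnd R2b m dt by (intro mult_left_mono) auto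
    also have "\<dots> \<le> h / 2 * (\<kappa> * R2)"
      using dt k0 by (intro mult_right_mono mult_nonneg_nonneg) (auto simp: R2_def intro!: mult_nonneg_nonneg add_nonneg_nonneg M0 Lc0 A0 D10)
    also have "\<dots> = D2 * h\<^sup>2" by (simp add: R2_def D2_def power2_eq_square algebra_simps)
    finally show ?thesis .
  qed
  have eul: "\<bar>euler0 f tau tn dt un m - un - (node tau tn dt m - tn) * ?f0\<bar> \<le> ce p * h\<^sup>2" if m: "m \<le> p" for m
  proof -
    have "\<bar>euler0 f tau tn dt un m - un - (node tau tn dt m - tn) * ?f0\<bar> \<le> ce m * h\<^sup>2"
      using euler_err[OF dt(1,2) h1 F0 Ml m] .
    also have "\<dots> \<le> ce p * h\<^sup>2" using ce_mono[OF m] by (intro mult_right_mono) auto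
    finally show ?thesis .
  qed
  show ?thesis
  proof (induction K)
    case 0
    show ?case
    proof (intro allI impI)
      fix m assume m: "m \<le> p"
      have "\<bar>Uh m - fp_iter f tau p tn dt un 0 m\<bar> \<le> D2 * h\<^sup>2 + ce p * h\<^sup>2"
        using base[OF m] eul[OF m] by simp
      then show "\<bar>Uh m - fp_iter f tau p tn dt un 0 m\<bar> \<le> CK 0 * h ^ (0 + 2)"
        by (simp add: CK_def algebra_simps power2_eq_square)
    qed
  next
    case (Suc K)
    show ?case
    proof (intro allI impI)
      fix m assume m: "m \<le> p"
      let ?U = "fp_iter f tau p tn dt un K"
      let ?e = "CK K * h ^ (K + 2)"
      have "Uh m - fp_iter f tau p tn dt un (Suc K) m
          = - (dt / 2) * Linv_apply tau p (\<lambda>i. ?F i - Fvec f tau p tn dt ?U i) m"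
      proof -
        have i1: "fp_iter f tau p tn dt un (Suc K) m = un - dt / 2 * Linv_apply tau p (Fvec f tau p tn dt ?U) m"
          by (rule iter_rep[OF m])
        have u1: "Uh m = un - dt / 2 * Linv_apply tau p ?F m" by (rule Uh_rep[OF dg m])
        have l1: "Linv_apply tau p ?F m - Linv_apply tau p (Fvec f tau p tn dt ?U) m
            = Linv_apply tau p (\<lambda>i. ?F i - Fvec f tau p tn dt ?U i) m" by (rule Linv_diff[OF m])
        show ?thesis unfolding i1 u1 l1[symmetric] by (simp add: algebra_simps)
      qed
      then have "\<bar>Uh m - fp_iter f tau p tn dt un (Suc K) m\<bar>
          = dt / 2 * \<bar>Linv_apply tau p (\<lambda>i. ?F i - Fvec f tau p tn dt ?U i) m\<bar>"
        using dt by (simp add: abs_mult)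
      also have "\<dots> \<le> dt / 2 * (\<kappa> * (2 * (Lc * (P * A * ?e) * A)))"
        using kbnd F_diff[OF Suc.IH] m dt by (intro mult_left_mono) auto
      also have "\<dots> = dt * (G * ?e)" by (simp add: G_def algebra_simps)
      also have "\<dots> \<le> h * (G * ?e)"
      proof (rule mult_right_mono)
        have "0 \<le> \<bar>Uh 0 - ?U 0\<bar>" by simp
        then have "0 \<le> ?e" using Suc.IH by (meson le0 order_trans)
        then show "0 \<le> G * ?e" using G0 by simp
      qed (use dt in simp)
      also have "\<dots> = CK (Suc K) * h ^ (Suc K + 2)" by (simp add: CK_def algebra_simps)
      finally show "\<bar>Uh m - fp_iter f tau p tn dt un (Suc K) m\<bar> \<le> CK (Suc K) * h ^ (Suc K + 2)" .
    qed
  qed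
qed

end



lemma Ck_cont: "Ck k g \<Longrightarrow> continuous_on UNIV g"
proof (cases k)
  case 0 then show "Ck k g \<Longrightarrow> continuous_on UNIV g" by simp
next
  case (Suc k')
  assume "Ck k g"
  then obtain g1 g2 where d: "\<forall>z. (g has_derivative (\<lambda>(a, b). g1 z * a + g2 z * b)) (at z)"
    using Suc by auto
  show ?thesis
    by (rule continuous_at_imp_continuous_on) (use d has_derivative_continuous in blast)
qed

lemma part_mono: assumes "\<forall>n<N. t n < t (Suc n)" shows "i \<le> j \<Longrightarrow> j \<le> N \<Longrightarrow> (t i :: real) \<le> t j"
proof (induction j)
  case 0 then show ?case by simp
next
  case (Suc j)
  show ?case
  proof (cases "i = Suc j")
    case False
    then have "t i \<le> t j" using Suc by simp
    moreover have "t j < t (Suc j)" using assms Suc.prems by simp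
    ultimately show ?thesis by simp
  qed simp
qed

theorem lemma3:
  fixes p K :: nat and T u0 :: real and f :: "real \<Rightarrow> real \<Rightarrow> real" and u :: "real \<Rightarrow> real"
    and tau omega :: "nat \<Rightarrow> real"
  assumes T_pos: "T > 0"
    and f_smooth: "Ck (2 * p + 1) (\<lambda>(t, x). f t x)"
    and f_lip: "\<exists>Lc. \<forall>t x y. \<bar>f t x - f t y\<bar> \<le> Lc * \<bar>x - y\<bar>"
    and u_init: "u 0 = u0"
    and u_ode: "\<forall>s\<in>{0..T}. (u has_real_derivative f s (u s)) (at s within {0..T})"
    and tau_mono: "\<forall>i<p. tau i < tau (Suc i)"
    and tau_first: "-1 < tau 0"
    and tau_last: "tau p = 1"
    and radau_exact: "\<forall>g :: real poly. degree g \<le> 2 * p \<longrightarrow>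
                        integral {-1..1} (poly g) = (\<Sum>j\<le>p. omega j * poly g (tau j))"
  shows "\<exists>C h0. h0 > 0 \<and>
     (\<forall>N t. t 0 = 0 \<and> t N = T \<and> (\<forall>n<N. t n < t (Suc n)) \<and> mesh N t \<le> h0 \<longrightarrow>
        (\<forall>n<N. \<forall>Uh. dg_solution f tau p (t n) (t (Suc n) - t n) (u (t n)) Uh \<longrightarrow>
           (\<forall>m\<le>p. \<bar>Uh m - fp_iter f tau p (t n) (t (Suc n) - t n) (u (t n)) K m\<bar>
                    \<le> C * mesh N t ^ (K + 2))))"
proof -
  define fc where "fc = (\<lambda>(t, x). f t x)"
  obtain Lc where Lc: "\<forall>t x y. \<bar>f t x - f t y\<bar> \<le> Lc * \<bar>x - y\<bar>" using f_lip by blast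
  define Lc0 where "Lc0 = max Lc 0"
  have Lc00: "0 \<le> Lc0" unfolding Lc0_def by simp
  have lip0: "\<forall>t x y. \<bar>f t x - f t y\<bar> \<le> Lc0 * \<bar>x - y\<bar>"
  proof (intro allI)
    fix t x y
    have "Lc * \<bar>x - y\<bar> \<le> Lc0 * \<bar>x - y\<bar>" unfolding Lc0_def by (intro mult_right_mono) auto
    then show "\<bar>f t x - f t y\<bar> \<le> Lc0 * \<bar>x - y\<bar>" using Lc by (meson order_trans)
  qed
  have fcont: "continuous_on UNIV fc" unfolding fc_def by (rule Ck_cont[OF f_smooth])
  from f_smooth obtain g1 g2 where
    der: "\<forall>z. (fc has_derivative (\<lambda>(a, b). g1 z * a + g2 z * b)) (at z)" and g1C: "Ck (2 * p) g1"
    unfolding fc_def by auto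
  have g1cont: "continuous_on UNIV g1" by (rule Ck_cont[OF g1C])
  interpret R: radau tau p using tau_mono tau_first tau_last by unfold_locales
  have "continuous_on {-1..1} (\<lambda>x. \<Sum>j\<le>p. \<bar>lag tau p j x\<bar>)"
    unfolding R.lag_poly by (intro continuous_intros cont_poly)
  then have "bounded ((\<lambda>x. \<Sum>j\<le>p. \<bar>lag tau p j x\<bar>) ` {-1..1})"
    by (intro compact_imp_bounded compact_continuous_image) auto
  then obtain A' where A': "\<forall>x\<in>{-1..1}. \<bar>\<Sum>j\<le>p. \<bar>lag tau p j x\<bar>\<bar> \<le> A'"
    unfolding bounded_real by auto
  define A where "A = max A' 0"
  have A0: "0 \<le> A" unfolding A_def by simp
  have Abnd: "\<forall>j\<le>p. \<forall>x\<in>{-1..1}. \<bar>lag tau p j x\<bar> \<le> A"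
  proof (intro allI impI ballI)
    fix j x assume j: "j \<le> p" and x: "x \<in> {-1..1::real}"
    have "\<bar>lag tau p j x\<bar> \<le> (\<Sum>j\<le>p. \<bar>lag tau p j x\<bar>)" using j by (intro member_le_sum) auto
    also have "\<dots> \<le> A'" using A'[rule_format, OF x] by simp
    finally show "\<bar>lag tau p j x\<bar> \<le> A" unfolding A_def by simp
  qed
  obtain \<kappa> where k0: "0 \<le> \<kappa>" and
    kbnd: "\<forall>r R m. (\<forall>i\<le>p. \<bar>r i\<bar> \<le> R) \<longrightarrow> m \<le> p \<longrightarrow> \<bar>Linv_apply tau p r m\<bar> \<le> \<kappa> * R"
    using R.Linv_bound by blast
  have ucont: "continuous_on {0..T} u"
    using u_ode by (auto simp: continuous_on_eq_continuous_within intro: DERIV_continuous)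
  have "bounded (u ` {0..T})" by (intro compact_imp_bounded compact_continuous_image ucont) auto
  then obtain R0 where R0: "\<forall>s\<in>{0..T}. \<bar>u s\<bar> \<le> R0" unfolding bounded_real by auto
  have "continuous_on {0..T} (\<lambda>s. fc (s, u s))"
    by (rule continuous_on_compose2[OF fcont]) (auto intro!: continuous_intros ucont)
  then have "bounded ((\<lambda>s. fc (s, u s)) ` {0..T})" by (intro compact_imp_bounded compact_continuous_image) auto
  then obtain F0' where F0': "\<forall>s\<in>{0..T}. \<bar>f s (u s)\<bar> \<le> F0'" unfolding bounded_real fc_def by auto
  define F0 where "F0 = max F0' 0"
  have "bounded (g1 ` ({0..T} \<times> {-R0..R0}))"
    by (intro compact_imp_bounded compact_continuous_image compact_Times continuous_on_subset[OF g1cont]) auto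
  then obtain M' where M': "\<forall>z\<in>{0..T} \<times> {-R0..R0}. \<bar>g1 z\<bar> \<le> M'" unfolding bounded_real by auto
  define M where "M = max M' 0"
  have Mlip: "\<bar>f s x - f tn x\<bar> \<le> M * (s - tn)"
    if tn: "0 \<le> tn" "tn \<le> s" "s \<le> T" and x: "\<bar>x\<bar> \<le> R0" for tn s x
  proof (cases "tn = s")
    case True then show ?thesis by simp
  next
    case False
    then have lt: "tn < s" using tn by simp
    have dd: "((\<lambda>s. f s x) has_real_derivative g1 (y, x)) (at y)" for y
    proof -
      have "((\<lambda>s. fc (s, x)) has_derivative (\<lambda>h. (\<lambda>(a, b). g1 (y, x) * a + g2 (y, x) * b) (h, 0))) (at y)"
        using has_derivative_compose[OF has_derivative_Pair[OF has_derivative_ident has_derivative_const]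
            der[rule_format, of "(y, x)"]] by simp
      then show ?thesis by (simp add: fc_def has_field_derivative_def)
    qed
    obtain z where z: "tn < z" "z < s" "f s x - f tn x = (s - tn) * g1 (z, x)"
      using MVT2[OF lt, of "\<lambda>s. f s x" "\<lambda>y. g1 (y, x)"] dd by blast
    have "(z, x) \<in> {0..T} \<times> {-R0..R0}" using z tn x by auto
    then have "\<bar>g1 (z, x)\<bar> \<le> M" using M' unfolding M_def by force
    then have "\<bar>(s - tn) * g1 (z, x)\<bar> \<le> (s - tn) * M" using lt by (simp add: abs_mult mult_left_mono)
    then show ?thesis using z by (simp add: mult.commute)
  qed
  have est: "est2 tau p f Lc0 A \<kappa> F0 M"
    unfolding est2_def est_def est2_axioms_def est_axioms_def
    using tau_mono tau_first tau_last Lc00 lip0 fcont A0 Abnd k0 kbnd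
    by (auto simp: radau_def fc_def F0_def M_def)
  interpret E: est2 tau p f Lc0 A \<kappa> F0 M by (rule est)
  show ?thesis
  proof (intro exI conjI allI impI)
    show "0 < E.h0" by (rule E.h0_pos)
  next
    fix N and t :: "nat \<Rightarrow> real" and n Uh m
    assume part: "t 0 = 0 \<and> t N = T \<and> (\<forall>n<N. t n < t (Suc n)) \<and> mesh N t \<le> E.h0"
      and n: "n < N" and dg: "dg_solution f tau p (t n) (t (Suc n) - t n) (u (t n)) Uh" and m: "m \<le> p"
    have tm: "\<forall>n<N. t n < t (Suc n)" using part by simp
    have tn0: "0 \<le> t n" using part_mono[OF tm, of 0 n] part n by simp
    have tn1: "t (Suc n) \<le> T" using part_mono[OF tm, of "Suc n" N] part n by simp
    have dt0: "0 < t (Suc n) - t n" using tm n by simp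
    have dth: "t (Suc n) - t n \<le> mesh N t" unfolding mesh_def using n by (intro Max_ge) auto
    have un: "\<bar>u (t n)\<bar> \<le> R0" using R0 tn0 tn1 dt0 by auto
    have F0b: "\<bar>f (t n) (u (t n))\<bar> \<le> F0" using F0' tn0 tn1 dt0 unfolding F0_def by force
    have Ml: "\<forall>s\<in>{t n..t n + (t (Suc n) - t n)}. \<bar>f s (u (t n)) - f (t n) (u (t n))\<bar> \<le> M * (s - t n)"
      using Mlip tn0 tn1 un by auto
    have "\<forall>m\<le>p. \<bar>Uh m - fp_iter f tau p (t n) (t (Suc n) - t n) (u (t n)) K m\<bar> \<le> E.CK K * mesh N t ^ (K + 2)"
      by (rule E.step[OF dt0 dth _ F0b Ml dg]) (use part in simp)
    then show "\<bar>Uh m - fp_iter f tau p (t n) (t (Suc n) - t n) (u (t n)) K m\<bar> \<le> E.CK K * mesh N t ^ (K + 2)"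
      using m by simp
  qed
qed


end
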